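(* Let $n\geq2$, $H=\{x\in\mathbb{R}^{n+1}:\sum_i x_i=0\}$, $p_H$ the orthogonal projection onto $H$, $V_{\mathcal{P}}=p_H(\{0,1\}^{n+1}\setminus\{(0,\dots,0),(1,\dots,1)\})$ (the vertex set of the Voronoi region of $A_n=\mathbb{Z}^{n+1}\cap H$), and let $\tilde G$ be the Cayley graph on $\frac12p_H(\mathbb{Z}^{n+1})$ with generating set $\frac12V_{\mathcal{P}}$. Then every clique $C$ of $\tilde G$ satisfies $\delta^0(C)=\frac{|C|}{|N[C]|}\leq\frac{1}{2^n}$.
   Context: In the Cayley graph, $x,y$ are adjacent iff $x-y\in\frac12V_{\mathcal{P}}$. A clique is a set of vertices any two distinct elements of which are adjacent. $N[C]=C+(\{0\}\cup\frac12V_{\mathcal{P}})$ is the closed neighborhood of $C$ in $\tilde G$. *)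

theory Defs
  imports "HOL-Analysis.Analysis"
begin

text \<open>Ambient space R^(n+1) is modelled as real^'d with CARD('d) = n+1.\<close>

definition hyperH :: "(real^'d) set" where
  "hyperH = {x. (\<Sum>i\<in>UNIV. x $ i) = 0}"

definition projH :: "real^'d \<Rightarrow> real^'d" where
  "projH x = x - (\<chi> i. (\<Sum>j\<in>UNIV. x $ j) / real CARD('d))"

definition VP :: "(real^'d) set" where
  "VP = projH ` ({x. \<forall>i. x $ i \<in> {0,1}} - {(\<chi> i. 0), (\<chi> i. 1)})"

definition cayley_vertices :: "(real^'d) set" where
  "cayley_vertices = (\<lambda>z. (1/2) *\<^sub>R projH z) ` {z. \<forall>i. z $ i \<in> \<int>}"

definition half_VP :: "(real^'d) set" where
  "half_VP = (\<lambda>v. (1/2) *\<^sub>R v) ` VP"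

definition cayley_adj :: "real^'d \<Rightarrow> real^'d \<Rightarrow> bool" where
  "cayley_adj x y \<longleftrightarrow> x \<in> cayley_vertices \<and> y \<in> cayley_vertices \<and> x - y \<in> half_VP"

definition is_clique :: "(real^'d) set \<Rightarrow> bool" where
  "is_clique C \<longleftrightarrow> C \<subseteq> cayley_vertices \<and> (\<forall>x\<in>C. \<forall>y\<in>C. x \<noteq> y \<longrightarrow> cayley_adj x y)"

definition closed_nbhd :: "(real^'d) set \<Rightarrow> (real^'d) set" where
  "closed_nbhd C = {c + v | c v. c \<in> C \<and> v \<in> insert 0 half_VP}"

end

theory Submission
  imports Defs
begin

definition Bset :: "(real^'d) set" where
  "Bset = {x. \<forall>i. x $ i \<in> {0,1}}"

lemma projH_add: "projH (a + b) = projH a + projH b"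
  unfolding projH_def by (simp add: vec_eq_iff sum.distrib add_divide_distrib)

lemma projH_eq_const:
  assumes "projH x = projH y"
  shows "x $ i - y $ i = x $ k - y $ k"
proof -
  from assms have "(projH x) $ i = (projH y) $ i" "(projH x) $ k = (projH y) $ k" by auto
  then show ?thesis unfolding projH_def by simp
qed

lemma projH_zero: "projH (0::real^'d) = 0"
  unfolding projH_def by (simp add: vec_eq_iff)

lemma chain_core:
  fixes s s' t :: "real^'d"
  assumes "s \<in> Bset" "s' \<in> Bset" "t \<in> Bset"
    and "\<And>i k. s$i - s'$i - t$i = s$k - s'$k - t$k"
  shows "(\<forall>i. s$i \<le> s'$i) \<or> (\<forall>i. s'$i \<le> s$i)"
proof (rule ccontr)
  assume "\<not> ?thesis"
  then obtain i k where ik: "s$i > s'$i" "s'$k > s$k" by (meson not_le)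
  have "s$i - s'$i - t$i = s$k - s'$k - t$k" using assms(4) .
  moreover have "s$i \<in> {0,1}" "s'$i \<in> {0,1}" "t$i \<in> {0,1}"
     "s$k \<in> {0,1}" "s'$k \<in> {0,1}" "t$k \<in> {0,1}" using assms(1-3) unfolding Bset_def by auto
  ultimately show False using ik by auto
qed

lemma disj_core:
  fixes s s' t t' :: "real^'d"
  assumes "s \<in> Bset" "s' \<in> Bset" "t \<in> Bset" "t' \<in> Bset"
    and le: "\<forall>i. s$i \<le> s'$i"
    and "s$j = 0" "s'$j = 1" "t$j = 0" "s'$j' = 0" "t'$j' = 0"
    and eq: "s$j + t$j - s'$j - t'$j = s$j' + t$j' - s'$j' - t'$j'"
  shows False
proof -
  have "s$j' \<in> {0,1}" "t$j' \<in> {0,1}" "t'$j \<in> {0,1}" using assms(1-4) unfolding Bset_def by auto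
  moreover have "s$j' \<le> 0" using le assms(9) by metis
  ultimately show False using eq assms(6-10) by auto
qed

lemma card_Z:
  fixes j :: "'d::finite"
  shows "card {t \<in> (Bset::(real^'d) set). t$j = 0} = 2 ^ (CARD('d) - 1)"
proof -
  let ?F = "\<lambda>i::'d. if i = j then {0::real} else {0,1}"
  have bij: "bij_betw vec_nth {t \<in> (Bset::(real^'d) set). t$j = 0} (PiE UNIV ?F)"
  proof (rule bij_betwI')
    show "\<And>x y. x \<in> {t \<in> Bset. t $ j = 0} \<Longrightarrow> y \<in> {t \<in> Bset. t $ j = 0} \<Longrightarrow> (vec_nth x = vec_nth y) = (x = y)"
      by (simp add: vec_eq_iff fun_eq_iff)
    show "\<And>x. x \<in> {t \<in> Bset. t $ j = 0} \<Longrightarrow> vec_nth x \<in> PiE UNIV ?F"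
      by (auto simp: Bset_def)
    show "\<And>y. y \<in> PiE UNIV ?F \<Longrightarrow> \<exists>x\<in>{t \<in> Bset. t $ j = 0}. y = vec_nth x"
    proof -
      fix y assume y: "y \<in> PiE UNIV ?F"
      have "vec_lambda y \<in> {t \<in> Bset. t $ j = 0}" using y
        by (auto simp: Bset_def PiE_iff split: if_splits)
      moreover have "y = vec_nth (vec_lambda y)" by (simp add: fun_eq_iff)
      ultimately show "\<exists>x\<in>{t \<in> Bset. t $ j = 0}. y = vec_nth x" by blast
    qed
  qed
  have "card {t \<in> (Bset::(real^'d) set). t$j = 0} = card (PiE UNIV ?F)"
    using bij_betw_same_card[OF bij] .
  also have "\<dots> = (\<Prod>i\<in>UNIV. card (?F i))" by (simp add: card_PiE)
  also have "\<dots> = (\<Prod>i\<in>UNIV. if i = j then 1 else 2)"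
    by (rule prod.cong) auto
  also have "\<dots> = 1 * (\<Prod>i\<in>UNIV - {j}. if i = j then 1 else 2)"
    by (subst prod.remove[of _ j]) auto
  also have "\<dots> = (\<Prod>i\<in>UNIV - {j}. 2)"
    by (simp add: prod.cong)
  also have "\<dots> = 2 ^ (CARD('d) - 1)" by (simp add: card_Diff_singleton)
  finally show ?thesis .
qed

theorem lemma12:
  fixes C :: "(real^'d) set"
  assumes "CARD('d) \<ge> 3"
    and "is_clique C"
  shows "real (card C) / real (card (closed_nbhd C)) \<le> 1 / 2 ^ (CARD('d) - 1)"
proof (cases "finite (closed_nbhd C) \<and> C \<noteq> {}")
  case False
  then show ?thesis by auto
next
  case True
  let ?one = "(\<chi> i. 1) :: real^'d"
  let ?zero = "(\<chi> i. 0) :: real^'d"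
  have CN: "C \<subseteq> closed_nbhd C"
    unfolding closed_nbhd_def by force
  have finC: "finite C" using True CN finite_subset by blast
  obtain c0 where c0: "c0 \<in> C" using True by blast
  have clq: "\<And>x y. x \<in> C \<Longrightarrow> y \<in> C \<Longrightarrow> x \<noteq> y \<Longrightarrow> x - y \<in> half_VP"
    using assms(2) unfolding is_clique_def cayley_adj_def by blast
  have hv: "\<exists>t. t \<in> Bset \<and> t \<noteq> ?one \<and> t \<noteq> ?zero \<and> v = (1/2) *\<^sub>R projH t" if "v \<in> half_VP" for v
    using that unfolding half_VP_def VP_def Bset_def by auto
  have zero_B: "?zero \<in> Bset" unfolding Bset_def by auto
  have zero_ne: "?zero \<noteq> ?one" by (simp add: vec_eq_iff)
  have projH_zero': "projH ?zero = 0" using projH_zero by (simp add: zero_vec_def)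
  have ex: "\<exists>s. s \<in> Bset \<and> s \<noteq> ?one \<and> c = c0 + (1/2) *\<^sub>R projH s" if cC: "c \<in> C" for c
  proof (cases "c = c0")
    case True
    then show ?thesis using zero_B zero_ne projH_zero' by (intro exI[of _ ?zero]) auto
  next
    case False
    then obtain t where "t \<in> Bset" "t \<noteq> ?one" "c - c0 = (1/2) *\<^sub>R projH t"
      using hv[OF clq[OF cC c0 False]] by blast
    then show ?thesis by (intro exI[of _ t]) (auto simp: algebra_simps)
  qed
  define sv where "sv c = (SOME s. s \<in> Bset \<and> s \<noteq> ?one \<and> c = c0 + (1/2) *\<^sub>R projH s)" for c
  have sv: "sv c \<in> Bset" "sv c \<noteq> ?one" "c = c0 + (1/2) *\<^sub>R projH (sv c)" if "c \<in> C" for c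
    using someI_ex[OF ex[OF that]] unfolding sv_def by blast+
  have svinj: "c = c'" if "c \<in> C" "c' \<in> C" "sv c = sv c'" for c c'
    using sv(3)[OF that(1)] sv(3)[OF that(2)] that(3) by simp
  have chain: "(\<forall>i. sv c$i \<le> sv c'$i) \<or> (\<forall>i. sv c'$i \<le> sv c$i)" if cc: "c \<in> C" "c' \<in> C" for c c'
  proof (cases "c = c'")
    case True then show ?thesis by auto
  next
    case False
    then obtain t where t: "t \<in> Bset" "c - c' = (1/2) *\<^sub>R projH t"
      using hv[OF clq[OF cc False]] by blast
    have "projH (sv c) = projH (sv c' + t)"
    proof -
      have "\<forall>i. (projH (sv c))$i = (projH (sv c'))$i + (projH t)$i"
      proof
        fix i
        have "(c - c')$i = ((1/2) *\<^sub>R projH t)$i" using t(2) by simp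
        moreover have "c$i = (c0 + (1/2) *\<^sub>R projH (sv c))$i"
          using sv(3)[OF cc(1)] by (rule arg_cong[where f="\<lambda>v. v$i"])
        then have "c$i = c0$i + (1/2) * (projH (sv c))$i"
          by (simp only: vector_add_component vector_scaleR_component real_scaleR_def)
        moreover have "c'$i = (c0 + (1/2) *\<^sub>R projH (sv c'))$i"
          using sv(3)[OF cc(2)] by (rule arg_cong[where f="\<lambda>v. v$i"])
        then have "c'$i = c0$i + (1/2) * (projH (sv c'))$i"
          by (simp only: vector_add_component vector_scaleR_component real_scaleR_def)
        ultimately show "(projH (sv c))$i = (projH (sv c'))$i + (projH t)$i" by simp
      qed
      then show ?thesis by (simp add: vec_eq_iff projH_add)
    qed
    then have "\<And>i k. sv c$i - sv c'$i - t$i = sv c$k - sv c'$k - t$k"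
    proof -
      fix i k
      assume h: "projH (sv c) = projH (sv c' + t)"
      show "sv c$i - sv c'$i - t$i = sv c$k - sv c'$k - t$k"
        using projH_eq_const[OF h, of i k] by (simp only: vector_add_component)
    qed
    then show ?thesis using chain_core[OF sv(1)[OF cc(1)] sv(1)[OF cc(2)] t(1)] by blast
  qed
  define lt where "lt c c' \<longleftrightarrow> (\<forall>i. sv c$i \<le> sv c'$i) \<and> sv c \<noteq> sv c'" for c c'
  have B01: "s$i = 0 \<or> s$i = 1" if "s \<in> Bset" for s i using that unfolding Bset_def by auto
  have exj: "\<exists>j. sv c$j = 0 \<and> (\<forall>c'\<in>C. lt c c' \<longrightarrow> sv c'$j = 1)" if cC: "c \<in> C" for c
  proof -
    define U where "U = {c'\<in>C. lt c c'}"
    show ?thesis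
    proof (cases "U = {}")
      case True
      have "\<exists>j. sv c$j = 0"
      proof (rule ccontr)
        assume "\<not> ?thesis"
        then have "\<forall>j. sv c$j = 1" using B01[OF sv(1)[OF cC]] by blast
        then have "sv c = ?one" by (simp add: vec_eq_iff)
        then show False using sv(2)[OF cC] by blast
      qed
      then show ?thesis using True unfolding U_def by auto
    next
      case False
      have finU: "finite U" using finC unfolding U_def by simp
      define f where "f x = (\<Sum>i\<in>UNIV. sv x $ i)" for x
      have "Min (f ` U) \<in> f ` U" using finU False by (intro Min_in) auto
      then obtain m where m1: "m \<in> U" "f m = Min (f ` U)" by auto
      have m: "m \<in> U" "\<And>x. x \<in> U \<Longrightarrow> f m \<le> f x"
        using m1 finU by auto
      have mC: "m \<in> C" and lcm: "lt c m" using m(1) unfolding U_def by auto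
      obtain j where j: "sv c$j \<noteq> sv m$j" using lcm unfolding lt_def by (auto simp: vec_eq_iff)
      have jle: "sv c$j \<le> sv m$j" using lcm unfolding lt_def by blast
      have j0: "sv c$j = 0" and j1: "sv m$j = 1"
        using j jle B01[OF sv(1)[OF cC], of j] B01[OF sv(1)[OF mC], of j] by auto
      have "sv c'$j = 1" if c'C: "c' \<in> C" and lt': "lt c c'" for c'
      proof -
        have c'U: "c' \<in> U" using c'C lt' unfolding U_def by auto
        have "\<forall>i. sv m$i \<le> sv c'$i"
        proof (rule ccontr)
          assume nle: "\<not> (\<forall>i. sv m$i \<le> sv c'$i)"
          then have le: "\<forall>i. sv c'$i \<le> sv m$i" using chain[OF mC c'C] by blast
          obtain k where "sv c'$k < sv m$k" using nle le by (meson not_le)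
          then have "f c' < f m" unfolding f_def using le
            by (intro sum_strict_mono_ex1) auto
          then show False using m(2)[OF c'U] by simp
        qed
        then have "sv c'$j \<ge> 1" using j1 by metis
        then show ?thesis using B01[OF sv(1)[OF c'C], of j] by auto
      qed
      then show ?thesis using j0 by blast
    qed
  qed
  then obtain jf where jf: "\<And>c. c \<in> C \<Longrightarrow> sv c$(jf c) = 0 \<and> (\<forall>c'\<in>C. lt c c' \<longrightarrow> sv c'$(jf c) = 1)"
    by metis
  define Z where "Z c = {t \<in> (Bset::(real^'d) set). t$(jf c) = 0}" for c
  define T where "T c = (\<lambda>t. c + (1/2) *\<^sub>R projH t) ` Z c" for c
  have Tsub: "T c \<subseteq> closed_nbhd C" if cC: "c \<in> C" for c
  proof
    fix w assume "w \<in> T c"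
    then obtain t where t: "t \<in> Bset" "t$(jf c) = 0" "w = c + (1/2) *\<^sub>R projH t"
      unfolding T_def Z_def by auto
    have "(1/2) *\<^sub>R projH t \<in> insert 0 half_VP"
    proof (cases "t = ?zero")
      case True then show ?thesis using projH_zero' by simp
    next
      case False
      have "t \<noteq> ?one" using t(2) by (metis vec_lambda_beta zero_neq_one)
      then have "projH t \<in> VP" using False t(1) unfolding VP_def Bset_def by auto
      then show ?thesis unfolding half_VP_def by auto
    qed
    then show "w \<in> closed_nbhd C" using cC t(3) unfolding closed_nbhd_def by blast
  qed
  have Tcard: "card (T c) = 2 ^ (CARD('d) - 1)" for c
  proof -
    have "inj_on (\<lambda>t. c + (1/2) *\<^sub>R projH t) (Z c)"
    proof (rule inj_onI)
      fix x y assume x: "x \<in> Z c" and y: "y \<in> Z c"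
        and eq: "c + (1/2) *\<^sub>R projH x = c + (1/2) *\<^sub>R projH y"
      from eq have "projH x = projH y" by simp
      then have "\<And>i. x$i - y$i = x$(jf c) - y$(jf c)" using projH_eq_const by blast
      then show "x = y" using x y unfolding Z_def by (simp add: vec_eq_iff)
    qed
    then show ?thesis unfolding T_def Z_def using card_Z by (simp add: card_image)
  qed
  have disj_lt: "T c \<inter> T c' = {}" if cC: "c \<in> C" and c'C: "c' \<in> C" and lt': "lt c c'" for c c'
  proof (rule ccontr)
    assume "T c \<inter> T c' \<noteq> {}"
    then obtain t t' where t: "t \<in> Bset" "t$(jf c) = 0" and t': "t' \<in> Bset" "t'$(jf c') = 0"
      and eq: "c + (1/2) *\<^sub>R projH t = c' + (1/2) *\<^sub>R projH t'"
      unfolding T_def Z_def by auto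
    have "projH (sv c + t) = projH (sv c' + t')"
    proof -
      have "\<forall>i. (projH (sv c))$i + (projH t)$i = (projH (sv c'))$i + (projH t')$i"
      proof
        fix i
        have "(c + (1/2) *\<^sub>R projH t)$i = (c' + (1/2) *\<^sub>R projH t')$i" using eq by simp
        moreover have "c$i = (c0 + (1/2) *\<^sub>R projH (sv c))$i"
          using sv(3)[OF cC] by (rule arg_cong[where f="\<lambda>v. v$i"])
        then have "c$i = c0$i + (1/2) * (projH (sv c))$i"
          by (simp only: vector_add_component vector_scaleR_component real_scaleR_def)
        moreover have "c'$i = (c0 + (1/2) *\<^sub>R projH (sv c'))$i"
          using sv(3)[OF c'C] by (rule arg_cong[where f="\<lambda>v. v$i"])
        then have "c'$i = c0$i + (1/2) * (projH (sv c'))$i"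
          by (simp only: vector_add_component vector_scaleR_component real_scaleR_def)
        ultimately show "(projH (sv c))$i + (projH t)$i = (projH (sv c'))$i + (projH t')$i" by simp
      qed
      then show ?thesis by (simp add: vec_eq_iff projH_add)
    qed
    then have ceq: "(sv c + t)$(jf c) - (sv c' + t')$(jf c) = (sv c + t)$(jf c') - (sv c' + t')$(jf c')"
      using projH_eq_const by blast
    have le': "\<forall>i. sv c$i \<le> sv c'$i" using lt' unfolding lt_def by blast
    have a1: "sv c$(jf c) = 0" using jf[OF cC] by blast
    have a2: "sv c'$(jf c) = 1" using jf[OF cC] c'C lt' by blast
    have a3: "sv c'$(jf c') = 0" using jf[OF c'C] by blast
    have ceq': "sv c$(jf c) + t$(jf c) - sv c'$(jf c) - t'$(jf c) = sv c$(jf c') + t$(jf c') - sv c'$(jf c') - t'$(jf c')"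
      using ceq by simp
    show False
      by (rule disj_core[OF sv(1)[OF cC] sv(1)[OF c'C] t(1) t'(1) le' a1 a2 t(2) a3 t'(2) ceq'])
  qed
  have disj: "T c \<inter> T c' = {}" if "c \<in> C" "c' \<in> C" "c \<noteq> c'" for c c'
  proof -
    have ne: "sv c \<noteq> sv c'" using svinj that by blast
    from chain[OF that(1,2)] show ?thesis
    proof
      assume "\<forall>i. sv c $ i \<le> sv c' $ i"
      then have "lt c c'" using ne unfolding lt_def by blast
      then show ?thesis using disj_lt[OF that(1,2)] by blast
    next
      assume "\<forall>i. sv c' $ i \<le> sv c $ i"
      then have "lt c' c" using ne unfolding lt_def by metis
      then show ?thesis using disj_lt[OF that(2,1)] by blast
    qed
  qed
  have "card (\<Union>c\<in>C. T c) = (\<Sum>c\<in>C. card (T c))"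
  proof (rule card_UN_disjoint[OF finC])
    show "\<forall>i\<in>C. finite (T i)" using Tsub True finite_subset by blast
    show "\<forall>i\<in>C. \<forall>j\<in>C. i \<noteq> j \<longrightarrow> T i \<inter> T j = {}" using disj by blast
  qed
  also have "\<dots> = card C * 2 ^ (CARD('d) - 1)" using Tcard by simp
  finally have "card C * 2 ^ (CARD('d) - 1) \<le> card (closed_nbhd C)"
    using card_mono[of "closed_nbhd C" "\<Union>c\<in>C. T c"] True Tsub by (simp add: UN_least)
  then have le: "real (card C) * 2 ^ (CARD('d) - 1) \<le> real (card (closed_nbhd C))"
    by (metis of_nat_le_iff of_nat_mult of_nat_numeral of_nat_power)
  have pos: "real (card (closed_nbhd C)) > 0"
    using True CN card_gt_0_iff by fastforce
  show ?thesis using le pos by (simp add: field_simps)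
qed

end
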